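(* Let $\ell\ge2$ and let $G$ be an $N$-AW graph. Then every vertex of degree $d\ge 2$ in $\overline{G}$ has at least $d-1$ neighbors (in $\overline{G}$) of degree at least $2$ in $\overline{G}$.
   Context: All graphs are finite and simple; $\overline{G}$ is the complement. Labels lie in $\mathbb{Z}_\ell$. In the neighborhood Lights Out game, toggling a vertex $w$ adds $1$ (mod $\ell$) to the label of each vertex of the closed neighborhood $N[w]$; the game is won when all labels are $0$; a graph is $N$-AW if every initial labeling can be won. *)

theory Defs
  imports Main
begin

definition simple_graph :: "'a set \<Rightarrow> ('a \<Rightarrow> 'a \<Rightarrow> bool) \<Rightarrow> bool" where
  "simple_graph V E \<longleftrightarrow> finite V \<and> (\<forall>u v. E u v \<longrightarrow> u \<in> V \<and> v \<in> V)
     \<and> (\<forall>u v. E u v \<longrightarrow> E v u) \<and> (\<forall>v. \<not> E v v)"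

definition closed_nbhd :: "'a set \<Rightarrow> ('a \<Rightarrow> 'a \<Rightarrow> bool) \<Rightarrow> 'a \<Rightarrow> 'a set" where
  "closed_nbhd V E w = insert w {u \<in> V. E w u}"

definition compl_edge :: "'a set \<Rightarrow> ('a \<Rightarrow> 'a \<Rightarrow> bool) \<Rightarrow> 'a \<Rightarrow> 'a \<Rightarrow> bool" where
  "compl_edge V E u v \<longleftrightarrow> u \<in> V \<and> v \<in> V \<and> u \<noteq> v \<and> \<not> E u v"

definition degree :: "'a set \<Rightarrow> ('a \<Rightarrow> 'a \<Rightarrow> bool) \<Rightarrow> 'a \<Rightarrow> nat" where
  "degree V E v = card {u \<in> V. E v u}"

text \<open>Labels in Z_l are represented by integers modulo l. Toggling vertex w
  (t w times) adds t w to each label in N[w]; the game is won when every label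
  is 0 mod l.\<close>
definition N_AW :: "nat \<Rightarrow> 'a set \<Rightarrow> ('a \<Rightarrow> 'a \<Rightarrow> bool) \<Rightarrow> bool" where
  "N_AW l V E \<longleftrightarrow> (\<forall>lab :: 'a \<Rightarrow> int. \<exists>t :: 'a \<Rightarrow> nat.
      \<forall>v\<in>V. (lab v + (\<Sum>w\<in>V. if v \<in> closed_nbhd V E w then int (t w) else 0))
              mod int l = 0)"

end

theory Submission
  imports Defs
begin

lemma key:
  assumes l2: "l \<ge> 2" and sg: "simple_graph V E" and aw: "N_AW l V E"
    and u1: "u1 \<in> V" and u2: "u2 \<in> V" and vV: "v \<in> V"
    and n1: "\<not> E u1 v" "u1 \<noteq> v" and n2: "\<not> E u2 v" "u2 \<noteq> v"
    and o1: "\<forall>y\<in>V. y \<noteq> u1 \<and> y \<noteq> v \<longrightarrow> E u1 y"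
    and o2: "\<forall>y\<in>V. y \<noteq> u2 \<and> y \<noteq> v \<longrightarrow> E u2 y"
  shows "u1 = u2"
proof (rule ccontr)
  assume ne: "u1 \<noteq> u2"
  have sym: "\<And>a b. E a b \<Longrightarrow> E b a" using sg unfolding simple_graph_def by blast
  have eq: "\<And>w. w \<in> V \<Longrightarrow> (u1 \<in> closed_nbhd V E w) = (u2 \<in> closed_nbhd V E w)"
  proof -
    fix w assume w: "w \<in> V"
    have a: "(u1 \<in> closed_nbhd V E w) = (w \<noteq> v)"
      using o1 n1 u1 w sym unfolding closed_nbhd_def by auto
    have b: "(u2 \<in> closed_nbhd V E w) = (w \<noteq> v)"
      using o2 n2 u2 w sym unfolding closed_nbhd_def by auto
    show "(u1 \<in> closed_nbhd V E w) = (u2 \<in> closed_nbhd V E w)" using a b by simp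
  qed
  obtain t :: "'a \<Rightarrow> nat" where t: "\<forall>x\<in>V. ((if x = u1 then 1 else 0) + (\<Sum>w\<in>V. if x \<in> closed_nbhd V E w then int (t w) else 0))
              mod int l = 0"
    using aw unfolding N_AW_def by (elim allE[where x="\<lambda>x. if x = u1 then 1 else 0"]) blast
  define S where "S = (\<Sum>w\<in>V. if u1 \<in> closed_nbhd V E w then int (t w) else 0)"
  have S2: "(\<Sum>w\<in>V. if u2 \<in> closed_nbhd V E w then int (t w) else 0) = S"
    unfolding S_def by (rule sum.cong) (use eq in auto)
  have A: "(1 + S) mod int l = 0" using t u1 unfolding S_def by auto
  have B: "S mod int l = 0" using t u2 ne S2 by auto
  have "1 mod int l = 0" using A B by (metis add.right_neutral mod_add_cong mod_mod_trivial)
  then show False using l2 by simp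
qed

theorem lemma4p13:
  fixes l :: nat and V :: "'a set" and E :: "'a \<Rightarrow> 'a \<Rightarrow> bool" and v :: 'a
  assumes "l \<ge> 2"
    and "simple_graph V E"
    and "N_AW l V E"
    and "v \<in> V"
    and "degree V (compl_edge V E) v \<ge> 2"
  shows "card {u \<in> V. compl_edge V E v u \<and> degree V (compl_edge V E) u \<ge> 2}
           \<ge> degree V (compl_edge V E) v - 1"
proof -
  have fin: "finite V" using assms(2) unfolding simple_graph_def by blast
  have sym: "\<And>a b. E a b \<Longrightarrow> E b a" using assms(2) unfolding simple_graph_def by blast
  define S where "S = {u \<in> V. compl_edge V E v u}"
  define T where "T = {u \<in> V. compl_edge V E v u \<and> degree V (compl_edge V E) u \<ge> 2}"
  have fS: "finite S" using fin unfolding S_def by simp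
  have TS: "T \<subseteq> S" unfolding S_def T_def by auto
  have small: "\<forall>y\<in>V. y \<noteq> u \<and> y \<noteq> v \<longrightarrow> E u y" if "u \<in> S - T" for u
  proof -
    have uV: "u \<in> V" and c: "compl_edge V E v u" and d: "degree V (compl_edge V E) u < 2"
      using that unfolding S_def T_def by auto
    have vin: "v \<in> {y \<in> V. compl_edge V E u y}" using c assms(4) sym unfolding compl_edge_def by auto
    have fin2: "finite {y \<in> V. compl_edge V E u y}" using fin by simp
    have "card {y \<in> V. compl_edge V E u y} \<le> Suc 0" using d unfolding degree_def by simp
    then have "\<forall>a\<in>{y \<in> V. compl_edge V E u y}. \<forall>b\<in>{y \<in> V. compl_edge V E u y}. a = b"
      using card_le_Suc0_iff_eq[OF fin2] by blast
    then show ?thesis using vin uV unfolding compl_edge_def by blast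
  qed
  have "\<forall>a\<in>S - T. \<forall>b\<in>S - T. a = b"
  proof (intro ballI)
    fix a b assume a: "a \<in> S - T" and b: "b \<in> S - T"
    have aa: "a \<in> V" "\<not> E a v" "a \<noteq> v" using a sym unfolding S_def compl_edge_def by auto
    have bb: "b \<in> V" "\<not> E b v" "b \<noteq> v" using b sym unfolding S_def compl_edge_def by auto
    show "a = b" by (rule key[OF assms(1,2,3) aa(1) bb(1) assms(4) aa(2,3) bb(2,3) small[OF a] small[OF b]])
  qed
  then have "card (S - T) \<le> Suc 0" using card_le_Suc0_iff_eq[of "S - T"] fS by blast
  moreover have "card S = card T + card (S - T)"
    using card_Diff_subset[OF finite_subset[OF TS fS] TS] card_mono[OF fS TS] by simp
  ultimately have "card S - 1 \<le> card T" by simp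
  then show ?thesis unfolding S_def T_def degree_def by simp
qed

end
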